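(* Let $\mathsf{X},\mathsf{Y}$ be Polish, $c$ measurable with $e^{-c}\in L^1(\mu\otimes\nu)$, and let $R$ be defined by $dR=\xi^{-1}e^{-c}d(\mu\otimes\nu)$ with $\xi=\int e^{-c}d(\mu\otimes\nu)$. Let $\mu,\mu'\in\mathcal{P}(\mathsf{X})$ with $H(\mu'|\mu)<\infty$, $\nu,\nu'\in\mathcal{P}(\mathsf{Y})$ with $H(\nu'|\nu)<\infty$, and measurable $f,f':\mathsf{X}\to\mathbb{R}$, $g,g':\mathsf{Y}\to\mathbb{R}$ with $$\tilde C_1:=\inf_{\alpha>0}\frac{2}{\alpha}\Big(\frac32+\log\int e^{\alpha|f'|}d\mu\Big)<\infty,\qquad \tilde C_2:=\inf_{\alpha>0}\frac{2}{\alpha}\Big(\frac32+\log\int e^{\alpha|g'|}d\nu\Big)<\infty.$$ Let $\pi\in\Pi(\mu,\nu)$ and $\pi'\in\Pi(\mu',\nu')$ satisfy $d\pi=e^{f\oplus g-c}d(\mu\otimes\nu)$ and $d\pi'=e^{f'\oplus g'-c}d(\mu\otimes\nu)$. Then $H(\pi'|R)<\infty$ and $$H(\pi|R)-H(\pi'|R)\le H(\pi|\pi')+\tilde C_1\Big(\sqrt{H(\mu'|\mu)}+\tfrac12H(\mu'|\mu)\Big)+\tilde C_2\Big(\sqrt{H(\nu'|\nu)}+\tfrac12H(\nu'|\nu)\Big).$$ If $\nu=\nu'$ and $(f,g)\in L^1(\mu)\times L^1(\nu)$, the requirement $\tilde C_2<\infty$ can be dropped.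
   Context: Relative entropy: $H(\rho|\sigma)=\int\log\frac{d\rho}{d\sigma}d\rho$ if $\rho\ll\sigma$, $+\infty$ otherwise. $\Pi(\mu,\nu)$: couplings of $\mu$ and $\nu$. $(f\oplus g)(x,y)=f(x)+g(y)$. *)

theory Defs
  imports "HOL-Probability.Probability"
begin

text \<open>For probability measures the
negative part of log(d rho/d sigma) is always rho-integrable, so the integral is
+infinity exactly when the log-density is not rho-integrable.\<close>
definition rel_entropy :: "'a measure \<Rightarrow> 'a measure \<Rightarrow> ereal" where
  "rel_entropy \<rho> \<sigma> =
     (if sets \<rho> = sets \<sigma> \<and> absolutely_continuous \<sigma> \<rho>
         \<and> integrable \<rho> (\<lambda>x. ln (enn2real (RN_deriv \<sigma> \<rho> x)))
      then ereal (\<integral>x. ln (enn2real (RN_deriv \<sigma> \<rho> x)) \<partial>\<rho>)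
      else \<infinity>)"

definition couplings :: "'a measure \<Rightarrow> 'b measure \<Rightarrow> ('a \<times> 'b) measure set" where
  "couplings \<mu> \<nu> = {\<pi>. sets \<pi> = sets (\<mu> \<Otimes>\<^sub>M \<nu>) \<and> prob_space \<pi>
                         \<and> distr \<pi> \<mu> fst = \<mu> \<and> distr \<pi> \<nu> snd = \<nu>}"

definition tildeC :: "'a measure \<Rightarrow> ('a \<Rightarrow> real) \<Rightarrow> ereal" where
  "tildeC \<mu> h = (INF \<alpha>\<in>{0<..}.
      (if integrable \<mu> (\<lambda>x. exp (\<alpha> * \<bar>h x\<bar>))
       then ereal (2 / \<alpha> * (3/2 + ln (\<integral>x. exp (\<alpha> * \<bar>h x\<bar>) \<partial>\<mu>)))
       else \<infinity>))"

end

theory Submission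
  imports Defs
begin

lemma young_ln: fixes a b :: real assumes "0 \<le> a"
  shows "a * b \<le> a * ln a - a + exp b"
proof (cases "a = 0")
  case True then show ?thesis by simp
next
  case False
  then have a: "a > 0" using assms by simp
  have "1 + (b - ln a) \<le> exp (b - ln a)" by (rule exp_ge_add_one_self)
  then have "a * (1 + (b - ln a)) \<le> a * exp (b - ln a)" using a by (intro mult_left_mono) auto
  also have "a * exp (b - ln a) = exp b" using a by (simp add: exp_diff)
  finally show ?thesis by (simp add: algebra_simps)
qed

lemma exp_taylor2: fixes z :: real
  shows "exp (- z) - 1 + z \<le> z\<^sup>2 / 2 * exp \<bar>z\<bar>"
proof -
  obtain t where t: "\<bar>t\<bar> \<le> \<bar>-z\<bar>" "exp (-z) = (\<Sum>m<2. ((-z) ^ m) / fact m) + (exp t / fact 2) * (-z) ^ 2"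
    using Maclaurin_exp_le[of "-z" 2] by blast
  have "exp t \<le> exp \<bar>z\<bar>" using t(1) by simp
  then have "exp t / 2 * z\<^sup>2 \<le> exp \<bar>z\<bar> / 2 * z\<^sup>2" by (intro mult_right_mono) auto
  with t(2) show ?thesis by (simp add: numeral_2_eq_2 power2_eq_square algebra_simps)
qed

lemma xlnx_ge: fixes a :: real assumes "0 \<le> a" shows "a - 1 \<le> a * ln a"
proof (cases "a = 0")
  case True then show ?thesis by simp
next
  case False
  then have a: "a > 0" using assms by simp
  have "ln (1/a) \<le> 1/a - 1" using a by (intro ln_le_minus_one) auto
  then have "- ln a \<le> 1/a - 1" using a by (simp add: ln_div)
  then have "a * (- ln a) \<le> a * (1/a - 1)" using a by (intro mult_left_mono) auto
  then show ?thesis using a by (simp add: algebra_simps)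
qed

lemma p_neg: fixes l t :: real assumes "0 < l" "l \<le> 1/3" "2 \<le> t"
  shows "2 + (4*l - 2)*t - l*(1-l)*t\<^sup>2 \<le> 0"
proof -
  have e: "2 + (4*l - 2)*t - l*(1-l)*t\<^sup>2 = (4*l\<^sup>2 + 4*l - 2) + (4*l\<^sup>2 - 2)*(t-2) - l*(1-l)*(t-2)\<^sup>2"
    by (simp add: power2_eq_square algebra_simps)
  have "l*l \<le> (1/3)*(1/3)" using assms by (intro mult_mono) auto
  then have "4*l\<^sup>2 \<le> 4/9" by (simp add: power2_eq_square)
  then have a1: "4*l\<^sup>2 + 4*l - 2 \<le> 0" using assms by simp
  have a2: "(4*l\<^sup>2 - 2)*(t-2) \<le> 0" using \<open>4*l\<^sup>2 \<le> 4/9\<close> assms by (intro mult_nonpos_nonneg) auto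
  have a3: "0 \<le> l*(1-l)*(t-2)\<^sup>2" using assms by simp
  show ?thesis using e a1 a2 a3 by linarith
qed

lemma D_antimono: fixes l x y :: real assumes "0 < l" "l \<le> 1/3" "2 \<le> x" "x \<le> y"
  shows "(2*y + l*y\<^sup>2) * exp ((l-1)*y) \<le> (2*x + l*x\<^sup>2) * exp ((l-1)*x)"
proof (rule DERIV_nonpos_imp_nonincreasing[OF assms(4)])
  fix t assume t: "x \<le> t" "t \<le> y"
  show "\<exists>d. ((\<lambda>t. (2*t + l*t\<^sup>2) * exp ((l-1)*t)) has_real_derivative d) (at t) \<and> d \<le> 0"
  proof (intro exI conjI)
    show "((\<lambda>t. (2*t + l*t\<^sup>2) * exp ((l-1)*t)) has_real_derivative
       (2 + (4*l - 2)*t - l*(1-l)*t\<^sup>2) * exp ((l-1)*t)) (at t)"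
      by (rule derivative_eq_intros refl | simp)+ (simp add: power2_eq_square algebra_simps)
    have "2 + (4*l - 2)*t - l*(1-l)*t\<^sup>2 \<le> 0" using assms t by (intro p_neg) auto
    then show "(2 + (4*l - 2)*t - l*(1-l)*t\<^sup>2) * exp ((l-1)*t) \<le> 0"
      by (simp add: mult_nonpos_nonneg)
  qed
qed

lemma tangent_ineq: fixes l A t :: real assumes l: "0 < l" "l \<le> 1/3" and A: "2 \<le> A" and t: "2 \<le> t"
  shows "t\<^sup>2 * exp (l*t) \<le> A\<^sup>2 * exp (l*A) + (2*A + l*A\<^sup>2) * exp ((l-1)*A) * (exp t - exp A)"
proof -
  define G where "G = (2*A + l*A\<^sup>2) * exp ((l-1)*A)"
  define \<Phi> where "\<Phi> = (\<lambda>t. A\<^sup>2 * exp (l*A) + G * (exp t - exp A) - t\<^sup>2 * exp (l*t))"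
  have eD: "(2*w + l*w\<^sup>2) * exp (l*w) = exp w * ((2*w + l*w\<^sup>2) * exp ((l-1)*w))" for w
  proof -
    have "exp w * exp ((l-1)*w) = exp (w + (l-1)*w)" by (simp add: exp_add)
    also have "w + (l-1)*w = l*w" by (simp add: algebra_simps)
    finally have "exp w * exp ((l-1)*w) = exp (l*w)" .
    then show ?thesis by (metis mult.left_commute)
  qed
  have der: "(\<Phi> has_real_derivative exp w * (G - (2*w + l*w\<^sup>2) * exp ((l-1)*w))) (at w)" for w
  proof -
    have "(\<Phi> has_real_derivative G * exp w - (2*w + l*w\<^sup>2) * exp (l*w)) (at w)"
      unfolding \<Phi>_def
      by (rule derivative_eq_intros refl | simp)+ (simp add: power2_eq_square algebra_simps)
    moreover have "G * exp w - (2*w + l*w\<^sup>2) * exp (l*w) = exp w * (G - (2*w + l*w\<^sup>2) * exp ((l-1)*w))"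
      by (simp only: eD) (simp add: algebra_simps)
    ultimately show ?thesis by simp
  qed
  have \<Phi>A: "\<Phi> A = 0" by (simp add: \<Phi>_def)
  have "0 \<le> \<Phi> t"
  proof (cases "A \<le> t")
    case True
    have "\<Phi> A \<le> \<Phi> t"
    proof (rule DERIV_nonneg_imp_nondecreasing[OF True])
      fix w assume w: "A \<le> w" "w \<le> t"
      have "(2*w + l*w\<^sup>2) * exp ((l-1)*w) \<le> G" unfolding G_def
        using A w l by (intro D_antimono) auto
      then show "\<exists>d. (\<Phi> has_real_derivative d) (at w) \<and> 0 \<le> d"
        using der[of w] by (intro exI[of _ "exp w * (G - (2*w + l*w\<^sup>2) * exp ((l-1)*w))"] conjI) (auto intro!: mult_nonneg_nonneg)
    qed
    then show ?thesis using \<Phi>A by simp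
  next
    case False
    then have ta: "t \<le> A" by simp
    have "\<Phi> A \<le> \<Phi> t"
    proof (rule DERIV_nonpos_imp_nonincreasing[OF ta])
      fix w assume w: "t \<le> w" "w \<le> A"
      have "G \<le> (2*w + l*w\<^sup>2) * exp ((l-1)*w)" unfolding G_def
        using t w l by (intro D_antimono) auto
      then show "\<exists>d. (\<Phi> has_real_derivative d) (at w) \<and> d \<le> 0"
        using der[of w] by (intro exI[of _ "exp w * (G - (2*w + l*w\<^sup>2) * exp ((l-1)*w))"] conjI) (auto intro!: mult_nonneg_nonpos)
    qed
    then show ?thesis using \<Phi>A by simp
  qed
  then show ?thesis by (simp add: \<Phi>_def G_def)
qed

lemma choose_u: fixes s :: real assumes s: "0 < s" "s < 37/50"
  shows "\<exists>u. 0 < u \<and> u \<le> 11/20 \<and> s\<^sup>2/u + u * exp u / 2 \<le> 3/4 * (2 * s + s\<^sup>2)"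
proof (cases "s \<le> 1/2")
  case True
  have "exp s \<le> 1 + s + s\<^sup>2" using s by (intro exp_bound) auto
  also have "\<dots> \<le> 1 + 3/2 * s" using True s by (simp add: power2_eq_square)
  finally have "s * exp s / 2 \<le> s * (1 + 3/2 * s) / 2" using s by (intro divide_right_mono mult_left_mono) auto
  then have "s\<^sup>2/s + s * exp s / 2 \<le> 3/4 * (2 * s + s\<^sup>2)" using s by (simp add: power2_eq_square algebra_simps)
  then show ?thesis using s True by (intro exI[of _ s]) auto
next
  case False
  show ?thesis
  proof (cases "s \<le> 59/100")
    case True
    have e: "exp (9/20::real) \<le> 1 + 9/20 + (9/20)\<^sup>2" by (intro exp_bound) auto
    have p: "0 \<le> (s - 1/2) * (59/100 - s)" using True False by (intro mult_nonneg_nonneg) auto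
    have "(s - 1/2) * (59/100 - s) = (1/2 + 59/100) * s - (1/2)*(59/100) - s\<^sup>2" by (simp add: power2_eq_square field_simps)
    then have p2: "s\<^sup>2 \<le> (1/2 + 59/100) * s - (1/2)*(59/100)" using p by linarith
    have "s\<^sup>2/(9/20) + (9/20) * exp (9/20) / 2 \<le> 3/4 * (2 * s + s\<^sup>2)"
    proof -
      have e': "exp (9/20::real) \<le> 661/400" using e by (simp add: power2_eq_square)
      have "s\<^sup>2/(9/20) = 20/9 * s\<^sup>2" by simp
      then show ?thesis using e' p2 True False by (simp add: field_simps)
    qed
    then show ?thesis by (intro exI[of _ "9/20"]) auto
  next
    case F2: False
    have e: "exp (11/20::real) \<le> 1 + 11/20 + (11/20)\<^sup>2" by (intro exp_bound) auto
    have p: "0 \<le> (s - 59/100) * (37/50 - s)" using F2 s by (intro mult_nonneg_nonneg) auto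
    have "(s - 59/100) * (37/50 - s) = (59/100 + 37/50) * s - (59/100)*(37/50) - s\<^sup>2" by (simp add: power2_eq_square field_simps)
    then have p2: "s\<^sup>2 \<le> (59/100 + 37/50) * s - (59/100)*(37/50)" using p by linarith
    have "s\<^sup>2/(11/20) + (11/20) * exp (11/20) / 2 \<le> 3/4 * (2 * s + s\<^sup>2)"
    proof -
      have e': "exp (11/20::real) \<le> 741/400" using e by (simp add: power2_eq_square)
      have "s\<^sup>2/(11/20) = 20/11 * s\<^sup>2" by simp
      then show ?thesis using e' p2 F2 s by (simp add: field_simps)
    qed
    then show ?thesis by (intro exI[of _ "11/20"]) auto
  qed
qed

lemma abs_le_exp_abs: fixes y :: real shows "\<bar>y\<bar> \<le> exp \<bar>y\<bar>"
  using exp_ge_add_one_self[of "\<bar>y\<bar>"] by linarith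

lemma DV0:
  fixes \<mu> :: "'a measure" and h \<phi> :: "'a \<Rightarrow> real"
  assumes P: "prob_space \<mu>"
    and hm: "h \<in> borel_measurable \<mu>" and hnn: "\<And>x. 0 \<le> h x"
    and hint: "integrable \<mu> h" and h1: "(\<integral>x. h x \<partial>\<mu>) = 1"
    and hlog: "integrable \<mu> (\<lambda>x. h x * ln (h x))"
    and \<phi>e: "integrable \<mu> (\<lambda>x. exp (\<phi> x))" and h\<phi>: "integrable \<mu> (\<lambda>x. h x * \<phi> x)"
  shows "(\<integral>x. h x * \<phi> x \<partial>\<mu>) \<le> (\<integral>x. h x * ln (h x) \<partial>\<mu>) - 1 + (\<integral>x. exp (\<phi> x) \<partial>\<mu>)"
proof -
  have "(\<integral>x. h x * \<phi> x \<partial>\<mu>) \<le> (\<integral>x. h x * ln (h x) - h x + exp (\<phi> x) \<partial>\<mu>)"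
    using hint hlog \<phi>e h\<phi> by (intro integral_mono) (auto intro!: young_ln hnn)
  also have "\<dots> = (\<integral>x. h x * ln (h x) \<partial>\<mu>) - (\<integral>x. h x \<partial>\<mu>) + (\<integral>x. exp (\<phi> x) \<partial>\<mu>)"
    using hint hlog \<phi>e by simp
  finally show ?thesis using h1 by simp
qed

lemma integrable_h_abs:
  fixes \<mu> :: "'a measure" and h \<psi> :: "'a \<Rightarrow> real"
  assumes hm: "h \<in> borel_measurable \<mu>" and hnn: "\<And>x. 0 \<le> h x"
    and hint: "integrable \<mu> h"
    and hlog: "integrable \<mu> (\<lambda>x. h x * ln (h x))"
    and \<psi>m: "\<psi> \<in> borel_measurable \<mu>" and \<psi>e: "integrable \<mu> (\<lambda>x. exp \<bar>\<psi> x\<bar>)"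
  shows "integrable \<mu> (\<lambda>x. h x * \<psi> x)"
proof (rule Bochner_Integration.integrable_bound[where f="\<lambda>x. h x * ln (h x) - h x + exp \<bar>\<psi> x\<bar>"])
  show "integrable \<mu> (\<lambda>x. h x * ln (h x) - h x + exp \<bar>\<psi> x\<bar>)" using hint hlog \<psi>e by simp
  show "(\<lambda>x. h x * \<psi> x) \<in> borel_measurable \<mu>" using hm \<psi>m by simp
  show "AE x in \<mu>. norm (h x * \<psi> x) \<le> norm (h x * ln (h x) - h x + exp \<bar>\<psi> x\<bar>)"
  proof (intro AE_I2)
    fix x
    have a: "h x * \<bar>\<psi> x\<bar> \<le> h x * ln (h x) - h x + exp \<bar>\<psi> x\<bar>" by (rule young_ln[OF hnn])
    have "norm (h x * \<psi> x) = h x * \<bar>\<psi> x\<bar>" using hnn[of x] by (simp add: abs_mult)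
    moreover have "0 \<le> h x * \<bar>\<psi> x\<bar>" using hnn[of x] by simp
    ultimately show "norm (h x * \<psi> x) \<le> norm (h x * ln (h x) - h x + exp \<bar>\<psi> x\<bar>)" using a by simp
  qed
qed

lemma weighted_bound:
  fixes \<mu> :: "'a measure" and h \<psi> :: "'a \<Rightarrow> real"
  assumes P: "prob_space \<mu>"
    and hm: "h \<in> borel_measurable \<mu>" and hnn: "\<And>x. 0 \<le> h x"
    and hint: "integrable \<mu> h" and h1: "(\<integral>x. h x \<partial>\<mu>) = 1"
    and hlog: "integrable \<mu> (\<lambda>x. h x * ln (h x))"
    and \<psi>m: "\<psi> \<in> borel_measurable \<mu>" and \<psi>e: "integrable \<mu> (\<lambda>x. exp \<bar>\<psi> x\<bar>)"
  shows "(\<integral>x. \<psi> x \<partial>\<mu>) - (\<integral>x. h x * \<psi> x \<partial>\<mu>)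
     \<le> (3 + 2 * ln (\<integral>x. exp \<bar>\<psi> x\<bar> \<partial>\<mu>)) *
        (sqrt (\<integral>x. h x * ln (h x) \<partial>\<mu>) + (\<integral>x. h x * ln (h x) \<partial>\<mu>) / 2)"
proof -
  interpret prob_space \<mu> by fact
  define H where "H = (\<integral>x. h x * ln (h x) \<partial>\<mu>)"
  define M where "M = (\<integral>x. exp \<bar>\<psi> x\<bar> \<partial>\<mu>)"
  define L where "L = ln M"
  define D where "D = (\<integral>x. \<psi> x \<partial>\<mu>) - (\<integral>x. h x * \<psi> x \<partial>\<mu>)"
  have \<psi>i: "integrable \<mu> \<psi>"
    by (rule Bochner_Integration.integrable_bound[OF \<psi>e \<psi>m]) (auto intro!: AE_I2 simp: abs_le_exp_abs)
  have h\<psi>i: "integrable \<mu> (\<lambda>x. h x * \<psi> x)"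
    by (rule integrable_h_abs[OF hm hnn hint hlog \<psi>m \<psi>e])
  have habs: "integrable \<mu> (\<lambda>x. h x * \<bar>\<psi> x\<bar>)"
    using integrable_h_abs[OF hm hnn hint hlog _ , of "\<lambda>x. \<bar>\<psi> x\<bar>"] \<psi>m \<psi>e by simp
  have H0: "0 \<le> H"
  proof -
    have "(\<integral>x. h x - 1 \<partial>\<mu>) \<le> H" unfolding H_def
      using hint hlog by (intro integral_mono) (auto intro!: xlnx_ge hnn)
    then show ?thesis using hint h1 by (simp add: prob_space)
  qed
  have M1: "1 \<le> M" unfolding M_def
  proof -
    have "(\<integral>x. 1 \<partial>\<mu>) \<le> (\<integral>x. exp \<bar>\<psi> x\<bar> \<partial>\<mu>)" using \<psi>e by (intro integral_mono) auto
    then show "1 \<le> (\<integral>x. exp \<bar>\<psi> x\<bar> \<partial>\<mu>)" by (simp add: prob_space)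
  qed
  then have M0: "0 < M" by simp
  have L0: "0 \<le> L" unfolding L_def using M1 by simp
  have eL: "exp L = M" unfolding L_def using M0 by simp
  \<comment> \<open>Jensen for the mean of |psi|\<close>
  have mL: "(\<integral>x. \<bar>\<psi> x\<bar> \<partial>\<mu>) \<le> L"
  proof -
    define m where "m = (\<integral>x. \<bar>\<psi> x\<bar> \<partial>\<mu>)"
    have "(\<integral>x. exp m * (1 + (\<bar>\<psi> x\<bar> - m)) \<partial>\<mu>) \<le> M" unfolding M_def
    proof (intro integral_mono)
      show "integrable \<mu> (\<lambda>x. exp m * (1 + (\<bar>\<psi> x\<bar> - m)))" using \<psi>i by simp
      show "integrable \<mu> (\<lambda>x. exp \<bar>\<psi> x\<bar>)" by fact
      fix x
      have "exp m * (1 + (\<bar>\<psi> x\<bar> - m)) \<le> exp m * exp (\<bar>\<psi> x\<bar> - m)"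
        by (intro mult_left_mono exp_ge_add_one_self) auto
      then show "exp m * (1 + (\<bar>\<psi> x\<bar> - m)) \<le> exp \<bar>\<psi> x\<bar>" by (simp add: exp_diff)
    qed
    also have "(\<integral>x. exp m * (1 + (\<bar>\<psi> x\<bar> - m)) \<partial>\<mu>) = exp m"
      using \<psi>i by (simp add: prob_space m_def algebra_simps)
    finally have "exp m \<le> M" .
    then have "ln (exp m) \<le> ln M" using M0 by (subst ln_le_cancel_iff) auto
    then have "m \<le> ln M" by simp
    then show ?thesis by (simp add: m_def L_def)
  qed
  have crude: "D \<le> 2 * L + H"
  proof -
    have e1: "integrable \<mu> (\<lambda>x. exp (\<bar>\<psi> x\<bar> - L))" using \<psi>e by (simp add: exp_diff)
    have i1: "integrable \<mu> (\<lambda>x. h x * (\<bar>\<psi> x\<bar> - L))" using habs hint by (simp add: right_diff_distrib)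
    have "(\<integral>x. h x * (\<bar>\<psi> x\<bar> - L) \<partial>\<mu>) \<le> H - 1 + (\<integral>x. exp (\<bar>\<psi> x\<bar> - L) \<partial>\<mu>)"
      unfolding H_def by (rule DV0[OF P hm hnn hint h1 hlog e1 i1])
    also have "(\<integral>x. exp (\<bar>\<psi> x\<bar> - L) \<partial>\<mu>) = 1"
      using M0 by (simp add: exp_diff eL M_def)
    also have "(\<integral>x. h x * (\<bar>\<psi> x\<bar> - L) \<partial>\<mu>) = (\<integral>x. h x * \<bar>\<psi> x\<bar> \<partial>\<mu>) - L"
      using habs hint h1 by (simp add: right_diff_distrib)
    finally have a: "(\<integral>x. h x * \<bar>\<psi> x\<bar> \<partial>\<mu>) \<le> H + L" by simp
    have b: "(\<integral>x. \<psi> x \<partial>\<mu>) \<le> (\<integral>x. \<bar>\<psi> x\<bar> \<partial>\<mu>)" using \<psi>i by (intro integral_mono) auto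
    have c: "- (\<integral>x. h x * \<psi> x \<partial>\<mu>) \<le> (\<integral>x. h x * \<bar>\<psi> x\<bar> \<partial>\<mu>)"
    proof -
      have "(\<integral>x. - (h x * \<psi> x) \<partial>\<mu>) \<le> (\<integral>x. h x * \<bar>\<psi> x\<bar> \<partial>\<mu>)"
        using h\<psi>i habs by (intro integral_mono) (auto simp: hnn abs_if mult_le_0_iff)
      then show ?thesis by simp
    qed
    show ?thesis unfolding D_def using a b c mL by linarith
  qed
  define A where "A = L + 2"
  have A2: "2 \<le> A" using L0 by (simp add: A_def)
  have lam: "l * D \<le> H + l\<^sup>2 / 2 * (A\<^sup>2 * exp (l * A))" if l: "0 < l" "l \<le> 1/3" for l
  proof -
    define G where "G = (2 * A + l * A\<^sup>2) * exp ((l-1) * A)"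
    have el: "integrable \<mu> (\<lambda>x. exp (- l * \<psi> x))"
    proof (rule Bochner_Integration.integrable_bound[OF \<psi>e])
      show "(\<lambda>x. exp (- l * \<psi> x)) \<in> borel_measurable \<mu>" using \<psi>m by simp
      show "AE x in \<mu>. norm (exp (- l * \<psi> x)) \<le> norm (exp \<bar>\<psi> x\<bar>)"
      proof (intro AE_I2)
        fix x
        have "- l * \<psi> x \<le> \<bar>\<psi> x\<bar>"
        proof -
          have "l * \<bar>\<psi> x\<bar> \<le> 1 * \<bar>\<psi> x\<bar>" using l by (intro mult_right_mono) auto
          then have "\<bar>l * \<psi> x\<bar> \<le> 1 * \<bar>\<psi> x\<bar>" using l by (simp add: abs_mult)
          then show ?thesis by linarith
        qed
        then show "norm (exp (- l * \<psi> x)) \<le> norm (exp \<bar>\<psi> x\<bar>)" by simp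
      qed
    qed
    have i1: "integrable \<mu> (\<lambda>x. h x * (- l * \<psi> x))" using h\<psi>i by (simp add: algebra_simps)
    have dv: "(\<integral>x. h x * (- l * \<psi> x) \<partial>\<mu>) \<le> H - 1 + (\<integral>x. exp (- l * \<psi> x) \<partial>\<mu>)"
      unfolding H_def by (rule DV0[OF P hm hnn hint h1 hlog el i1])
    have pw: "exp (- l * \<psi> x) - 1 + l * \<psi> x \<le> l\<^sup>2 / 2 * (A\<^sup>2 * exp (l * A) + G * (exp 2 * exp \<bar>\<psi> x\<bar> - exp A))" for x
    proof -
      have "exp (- (l * \<psi> x)) - 1 + l * \<psi> x \<le> (l * \<psi> x)\<^sup>2 / 2 * exp \<bar>l * \<psi> x\<bar>" by (rule exp_taylor2)
      also have "\<dots> = l\<^sup>2 / 2 * ((\<bar>\<psi> x\<bar>)\<^sup>2 * exp (l * \<bar>\<psi> x\<bar>))" using l by (simp add: abs_mult power_mult_distrib)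
      also have "(\<bar>\<psi> x\<bar>)\<^sup>2 * exp (l * \<bar>\<psi> x\<bar>) \<le> (\<bar>\<psi> x\<bar> + 2)\<^sup>2 * exp (l * (\<bar>\<psi> x\<bar> + 2))"
        using l by (intro mult_mono power_mono) auto
      also have "\<dots> \<le> A\<^sup>2 * exp (l * A) + G * (exp (\<bar>\<psi> x\<bar> + 2) - exp A)"
        unfolding G_def using l A2 by (intro tangent_ineq) auto
      also have "exp (\<bar>\<psi> x\<bar> + 2) = exp 2 * exp \<bar>\<psi> x\<bar>" by (simp add: exp_add)
      finally show ?thesis using l by (simp add: mult_left_mono)
    qed
    have ib: "integrable \<mu> (\<lambda>x. l\<^sup>2 / 2 * (A\<^sup>2 * exp (l * A) + G * (exp 2 * exp \<bar>\<psi> x\<bar> - exp A)))"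
      using \<psi>e by simp
    have "(\<integral>x. exp (- l * \<psi> x) - 1 + l * \<psi> x \<partial>\<mu>) \<le> (\<integral>x. l\<^sup>2 / 2 * (A\<^sup>2 * exp (l * A) + G * (exp 2 * exp \<bar>\<psi> x\<bar> - exp A)) \<partial>\<mu>)"
      using el \<psi>i ib pw by (intro integral_mono) auto
    also have "\<dots> = l\<^sup>2 / 2 * (A\<^sup>2 * exp (l * A) + G * (exp 2 * M - exp A))"
      using \<psi>e by (simp add: M_def prob_space)
    also have "exp 2 * M = exp A" unfolding A_def using eL by (simp add: exp_add)
    finally have t: "(\<integral>x. exp (- l * \<psi> x) - 1 + l * \<psi> x \<partial>\<mu>) \<le> l\<^sup>2 / 2 * (A\<^sup>2 * exp (l * A))" by simp
    have "(\<integral>x. exp (- l * \<psi> x) - 1 + l * \<psi> x \<partial>\<mu>) = (\<integral>x. exp (- l * \<psi> x) \<partial>\<mu>) - 1 + l * (\<integral>x. \<psi> x \<partial>\<mu>)"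
      using el \<psi>i by (simp add: prob_space)
    moreover have "(\<integral>x. h x * (- l * \<psi> x) \<partial>\<mu>) = - l * (\<integral>x. h x * \<psi> x \<partial>\<mu>)"
      by (simp add: algebra_simps)
    ultimately show ?thesis using dv t unfolding D_def by (simp add: algebra_simps)
  qed
  have all_s: "D \<le> (3 + 2 * L) * (s + s\<^sup>2 / 2)" if s: "0 < s" "H \<le> s\<^sup>2" for s
  proof (cases "s < 37/50")
    case True
    obtain u where u: "0 < u" "u \<le> 11/20" "s\<^sup>2/u + u * exp u / 2 \<le> 3/4 * (2 * s + s\<^sup>2)"
      using choose_u[OF s(1) True] by blast
    define l where "l = u / A"
    have l0: "0 < l" using u A2 by (simp add: l_def)
    have "l \<le> u / 2" unfolding l_def using u A2 by (intro divide_left_mono) auto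
    then have l3: "l \<le> 1/3" using u by simp
    have lA: "l * A = u" using A2 by (simp add: l_def)
    have "l * D \<le> H + l\<^sup>2 / 2 * (A\<^sup>2 * exp u)" using lam[OF l0 l3] lA by simp
    then have "D \<le> (H + l\<^sup>2 / 2 * (A\<^sup>2 * exp u)) / l" using l0 by (simp add: field_simps)
    also have "(H + l\<^sup>2 / 2 * (A\<^sup>2 * exp u)) / l = A * (H / u + u * exp u / 2)"
      using u A2 by (simp add: l_def field_simps power2_eq_square)
    also have "\<dots> \<le> A * (s\<^sup>2 / u + u * exp u / 2)"
      using u A2 s by (intro mult_left_mono add_right_mono divide_right_mono) auto
    also have "\<dots> \<le> A * (3/4 * (2 * s + s\<^sup>2))" using u A2 by (intro mult_left_mono) auto
    also have "\<dots> \<le> (A - 1/2) * (2 * s + s\<^sup>2)"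
    proof -
      have "0 \<le> 2 * s + s\<^sup>2" using s by simp
      then have "(3/4 * A) * (2 * s + s\<^sup>2) \<le> (A - 1/2) * (2 * s + s\<^sup>2)" using A2 by (intro mult_right_mono) auto
      then show ?thesis by (simp add: algebra_simps)
    qed
    also have "\<dots> = (3 + 2 * L) * (s + s\<^sup>2 / 2)" by (simp add: A_def algebra_simps)
    finally show ?thesis .
  next
    case False
    have "1 \<le> s + s\<^sup>2 / 2"
    proof -
      have "(37/50)\<^sup>2 \<le> s\<^sup>2" using False by (intro power_mono) auto
      then show ?thesis using False by (simp add: power2_eq_square)
    qed
    then have "2 * L * 1 \<le> 2 * L * (s + s\<^sup>2 / 2)" using L0 by (intro mult_left_mono) auto
    moreover have "s\<^sup>2 \<le> 3 * (s + s\<^sup>2 / 2)"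
    proof -
      have "0 \<le> s\<^sup>2" by simp
      then show ?thesis using s(1) by (simp add: field_simps)
    qed
    ultimately have "D \<le> 3 * (s + s\<^sup>2 / 2) + 2 * L * (s + s\<^sup>2 / 2)" using crude s by linarith
    also have "3 * (s + s\<^sup>2 / 2) + 2 * L * (s + s\<^sup>2 / 2) = (3 + 2 * L) * (s + s\<^sup>2 / 2)"
      by (simp add: distrib_right)
    finally show ?thesis .
  qed
  have "D \<le> (3 + 2 * L) * (sqrt H + H / 2)"
  proof (cases "H > 0")
    case True
    then show ?thesis using all_s[of "sqrt H"] by simp
  next
    case False
    then have H00: "H = 0" using H0 by simp
    have "D \<le> 0"
    proof (rule ccontr)
      assume "\<not> D \<le> 0"
      then have Dp: "0 < D" by simp
      define s where "s = min (1/2) (D / (2 * (3 + 2 * L)))"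
      have s0: "0 < s" using Dp L0 by (simp add: s_def)
      have s1: "s \<le> 1/2" unfolding s_def by (rule min.cobounded1)
      have s2: "s \<le> D / (2 * (3 + 2 * L))" unfolding s_def by (rule min.cobounded2)
      have "s\<^sup>2 \<le> s * (1/2)" using s0 s1 by (simp add: power2_eq_square)
      then have "s + s\<^sup>2 / 2 \<le> 5/4 * s" by simp
      then have a: "(3 + 2 * L) * (s + s\<^sup>2 / 2) \<le> (3 + 2 * L) * (5/4 * s)" using L0 by (intro mult_left_mono) auto
      have "(3 + 2 * L) * s \<le> (3 + 2 * L) * (D / (2 * (3 + 2 * L)))" using s2 L0 by (intro mult_left_mono) auto
      also have "\<dots> = D / 2" using L0 by (simp add: field_simps)
      finally have "(3 + 2 * L) * s \<le> D / 2" .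
      then have "(3 + 2 * L) * (5/4 * s) \<le> 5/8 * D" by (simp add: algebra_simps)
      note b = this
      then have "(3 + 2 * L) * (s + s\<^sup>2 / 2) < D" using Dp a b by linarith
      moreover have "D \<le> (3 + 2 * L) * (s + s\<^sup>2 / 2)" using all_s[OF s0] H00 by simp
      ultimately show False by simp
    qed
    then show ?thesis using H00 by simp
  qed
  then show ?thesis unfolding D_def H_def L_def M_def .
qed

lemma rel_entropy_density:
  fixes P :: "'a measure" and a b :: "'a \<Rightarrow> real"
  assumes sf: "sigma_finite_measure P"
    and am: "a \<in> borel_measurable P" and bm: "b \<in> borel_measurable P"
    and apos: "\<And>x. 0 < a x" and bpos: "\<And>x. 0 < b x"
  shows "rel_entropy (density P (\<lambda>x. ennreal (a x))) (density P (\<lambda>x. ennreal (b x))) =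
    (if integrable (density P (\<lambda>x. ennreal (a x))) (\<lambda>x. ln (a x / b x))
     then ereal (\<integral>x. ln (a x / b x) \<partial>density P (\<lambda>x. ennreal (a x))) else \<infinity>)"
proof -
  define \<rho> where "\<rho> = density P (\<lambda>x. ennreal (a x))"
  define \<sigma> where "\<sigma> = density P (\<lambda>x. ennreal (b x))"
  have sets: "sets \<rho> = sets \<sigma>" by (simp add: \<rho>_def \<sigma>_def)
  have ac: "absolutely_continuous \<sigma> \<rho>"
    unfolding absolutely_continuous_def
  proof
    fix A assume "A \<in> null_sets \<sigma>"
    then have A: "A \<in> sets P" "AE x in P. x \<in> A \<longrightarrow> ennreal (b x) = 0"
      unfolding \<sigma>_def using bm by (auto simp: null_sets_density_iff)
    then have "AE x in P. x \<in> A \<longrightarrow> ennreal (a x) = 0"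
      using A(2)
    proof eventually_elim
      case (elim x)
      have "\<not> b x \<le> 0" using bpos[of x] by simp
      then show ?case using elim by (auto simp: ennreal_eq_0_iff)
    qed
    then show "A \<in> null_sets \<rho>" unfolding \<rho>_def using am A by (auto simp: null_sets_density_iff)
  qed
  have dd: "density \<sigma> (\<lambda>x. ennreal (a x / b x)) = \<rho>"
  proof -
    have "\<And>x. ennreal (b x) * ennreal (a x / b x) = ennreal (a x)"
    proof -
      fix x
      have "b x \<noteq> 0" using bpos[of x] by simp
      then show "ennreal (b x) * ennreal (a x / b x) = ennreal (a x)"
        using bpos[of x] apos[of x] by (simp add: ennreal_mult'[symmetric] less_imp_le)
    qed
    then show ?thesis unfolding \<sigma>_def \<rho>_def using am bm by (subst density_density_eq) auto
  qed
  interpret Ps: sigma_finite_measure P by fact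
  have "sigma_finite_measure \<sigma>" unfolding \<sigma>_def using bm
    by (subst Ps.sigma_finite_iff_density_finite) auto
  interpret \<sigma>: sigma_finite_measure \<sigma> by fact
  have "AE x in \<sigma>. ennreal (a x / b x) = RN_deriv \<sigma> \<rho> x"
    by (rule \<sigma>.RN_deriv_unique[OF _ dd]) (use am bm in \<open>simp add: \<sigma>_def\<close>)
  then have "AE x in \<rho>. ennreal (a x / b x) = RN_deriv \<sigma> \<rho> x"
    by (rule absolutely_continuous_AE[OF sets ac])
  then have ae: "AE x in \<rho>. ln (enn2real (RN_deriv \<sigma> \<rho> x)) = ln (a x / b x)"
  proof eventually_elim
    case (elim x)
    have "0 \<le> a x / b x" using apos[of x] bpos[of x] by simp
    then show ?case using elim[symmetric] by simp
  qed
  have m1: "(\<lambda>x. ln (enn2real (RN_deriv \<sigma> \<rho> x))) \<in> borel_measurable \<rho>"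
  proof -
    have "(\<lambda>x. ln (enn2real (RN_deriv \<sigma> \<rho> x))) \<in> borel_measurable \<sigma>" by measurable
    then show ?thesis by (subst measurable_cong_sets[OF sets refl])
  qed
  have m2: "(\<lambda>x. ln (a x / b x)) \<in> borel_measurable \<rho>" using am bm by (simp add: \<rho>_def)
  have ii: "integrable \<rho> (\<lambda>x. ln (enn2real (RN_deriv \<sigma> \<rho> x))) \<longleftrightarrow> integrable \<rho> (\<lambda>x. ln (a x / b x))"
    by (rule integrable_cong_AE[OF m1 m2 ae])
  have jj: "(\<integral>x. ln (enn2real (RN_deriv \<sigma> \<rho> x)) \<partial>\<rho>) = (\<integral>x. ln (a x / b x) \<partial>\<rho>)"
    by (rule integral_cong_AE[OF m1 m2 ae])
  show ?thesis
    unfolding rel_entropy_def \<rho>_def[symmetric] \<sigma>_def[symmetric] using sets ac ii jj by simp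
qed

lemma rel_entropy_finite_props:
  fixes \<mu> \<mu>' :: "'a measure"
  assumes P: "prob_space \<mu>" and P': "prob_space \<mu>'" and sets: "sets \<mu>' = sets \<mu>"
    and fin: "rel_entropy \<mu>' \<mu> < \<infinity>"
  defines "h \<equiv> (\<lambda>x. enn2real (RN_deriv \<mu> \<mu>' x))"
  shows "\<mu>' = density \<mu> (\<lambda>x. ennreal (h x))" and "h \<in> borel_measurable \<mu>" and "\<And>x. 0 \<le> h x"
    and "integrable \<mu> h" and "(\<integral>x. h x \<partial>\<mu>) = 1" and "integrable \<mu> (\<lambda>x. h x * ln (h x))"
    and "rel_entropy \<mu>' \<mu> = ereal (\<integral>x. h x * ln (h x) \<partial>\<mu>)"
proof -
  interpret prob_space \<mu> by fact
  interpret \<mu>': prob_space \<mu>' by fact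
  have c: "absolutely_continuous \<mu> \<mu>'" "integrable \<mu>' (\<lambda>x. ln (enn2real (RN_deriv \<mu> \<mu>' x)))"
    and re: "rel_entropy \<mu>' \<mu> = ereal (\<integral>x. ln (enn2real (RN_deriv \<mu> \<mu>' x)) \<partial>\<mu>')"
    using fin unfolding rel_entropy_def by (auto split: if_splits simp: sets)
  have d1: "density \<mu> (RN_deriv \<mu> \<mu>') = \<mu>'" by (rule density_RN_deriv[OF c(1) sets])
  have "AE x in \<mu>. RN_deriv \<mu> \<mu>' x \<noteq> \<infinity>"
    by (rule RN_deriv_finite[OF _ c(1) sets]) (simp add: \<mu>'.sigma_finite_measure_axioms)
  then have "AE x in \<mu>. RN_deriv \<mu> \<mu>' x = ennreal (h x)"
    by eventually_elim (auto simp: h_def less_top ennreal_enn2real)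
  then have "density \<mu> (RN_deriv \<mu> \<mu>') = density \<mu> (\<lambda>x. ennreal (h x))"
    by (intro density_cong) (auto simp: h_def)
  with d1 show dens: "\<mu>' = density \<mu> (\<lambda>x. ennreal (h x))" by simp
  show hm: "h \<in> borel_measurable \<mu>" by (simp add: h_def)
  show hnn: "\<And>x. 0 \<le> h x" by (simp add: h_def)
  have "integrable \<mu>' (\<lambda>x. 1::real)" by simp
  then have "integrable \<mu> (\<lambda>x. h x * 1)" using dens hm hnn
    by (subst (asm) dens) (simp add: integrable_density)
  then show hint: "integrable \<mu> h" by simp
  have "(\<integral>x. (1::real) \<partial>density \<mu> (\<lambda>x. ennreal (h x))) = (\<integral>x. h x *\<^sub>R (1::real) \<partial>\<mu>)"
    by (rule integral_density) (auto simp: hm hnn)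
  then have "(\<integral>x. (1::real) \<partial>\<mu>') = (\<integral>x. h x \<partial>\<mu>)" using dens by simp
  then show "(\<integral>x. h x \<partial>\<mu>) = 1" by (simp add: \<mu>'.prob_space)
  have "integrable \<mu>' (\<lambda>x. ln (h x))" using c(2) by (simp add: h_def)
  then show hl: "integrable \<mu> (\<lambda>x. h x * ln (h x))" using hm hnn
    by (subst (asm) dens) (simp add: integrable_density)
  have "(\<integral>x. ln (h x) \<partial>density \<mu> (\<lambda>x. ennreal (h x))) = (\<integral>x. h x *\<^sub>R ln (h x) \<partial>\<mu>)"
    by (rule integral_density) (auto simp: hm hnn h_def)
  then have "(\<integral>x. ln (h x) \<partial>\<mu>') = (\<integral>x. h x * ln (h x) \<partial>\<mu>)" using dens by simp
  then show "rel_entropy \<mu>' \<mu> = ereal (\<integral>x. h x * ln (h x) \<partial>\<mu>)" using re by (simp add: h_def)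
qed

lemma marg_fst:
  fixes Q :: "('a \<times> 'b) measure" and M :: "'a measure" and N :: "'b measure" and F :: "'a \<Rightarrow> real"
  assumes s: "sets Q = sets (M \<Otimes>\<^sub>M N)" and d: "distr Q M fst = M" and F: "F \<in> borel_measurable M"
  shows "integrable Q (\<lambda>z. F (fst z)) \<longleftrightarrow> integrable M F" and "(\<integral>z. F (fst z) \<partial>Q) = (\<integral>x. F x \<partial>M)"
proof -
  have m: "fst \<in> measurable Q M" by (subst measurable_cong_sets[OF s refl]) (rule measurable_fst)
  show "integrable Q (\<lambda>z. F (fst z)) \<longleftrightarrow> integrable M F"
    using integrable_distr_eq[OF m F] d by simp
  show "(\<integral>z. F (fst z) \<partial>Q) = (\<integral>x. F x \<partial>M)"
    using integral_distr[OF m F] d by simp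
qed

lemma marg_snd:
  fixes Q :: "('a \<times> 'b) measure" and M :: "'a measure" and N :: "'b measure" and F :: "'b \<Rightarrow> real"
  assumes s: "sets Q = sets (M \<Otimes>\<^sub>M N)" and d: "distr Q N snd = N" and F: "F \<in> borel_measurable N"
  shows "integrable Q (\<lambda>z. F (snd z)) \<longleftrightarrow> integrable N F" and "(\<integral>z. F (snd z) \<partial>Q) = (\<integral>x. F x \<partial>N)"
proof -
  have m: "snd \<in> measurable Q N" by (subst measurable_cong_sets[OF s refl]) (rule measurable_snd)
  show "integrable Q (\<lambda>z. F (snd z)) \<longleftrightarrow> integrable N F"
    using integrable_distr_eq[OF m F] d by simp
  show "(\<integral>z. F (snd z) \<partial>Q) = (\<integral>x. F x \<partial>N)"
    using integral_distr[OF m F] d by simp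
qed

lemma tildeC_exp_moment:
  assumes "tildeC \<mu> f < \<infinity>"
  shows "\<exists>\<alpha>>0. integrable \<mu> (\<lambda>x. exp (\<alpha> * \<bar>f x\<bar>))"
proof -
  obtain \<alpha> where "\<alpha> \<in> {0<..}" and
    "(if integrable \<mu> (\<lambda>x. exp (\<alpha> * \<bar>f x\<bar>))
       then ereal (2 / \<alpha> * (3/2 + ln (\<integral>x. exp (\<alpha> * \<bar>f x\<bar>) \<partial>\<mu>)))
       else \<infinity>) < \<infinity>"
    using assms unfolding tildeC_def by (simp only: INF_less_iff) blast
  then show ?thesis by (auto split: if_splits)
qed

lemma tildeC_nonneg:
  assumes "prob_space \<mu>"
  shows "0 \<le> tildeC \<mu> f"
  unfolding tildeC_def
proof (rule INF_greatest)
  interpret prob_space \<mu> by fact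
  fix \<alpha> :: real assume a: "\<alpha> \<in> {0<..}"
  show "0 \<le> (if integrable \<mu> (\<lambda>x. exp (\<alpha> * \<bar>f x\<bar>))
       then ereal (2 / \<alpha> * (3/2 + ln (\<integral>x. exp (\<alpha> * \<bar>f x\<bar>) \<partial>\<mu>)))
       else \<infinity>)"
  proof (cases "integrable \<mu> (\<lambda>x. exp (\<alpha> * \<bar>f x\<bar>))")
    case True
    have "(\<integral>x. 1 \<partial>\<mu>) \<le> (\<integral>x. exp (\<alpha> * \<bar>f x\<bar>) \<partial>\<mu>)"
      using True a by (intro integral_mono) auto
    then have "1 \<le> (\<integral>x. exp (\<alpha> * \<bar>f x\<bar>) \<partial>\<mu>)" by (simp add: prob_space)
    then have "0 \<le> ln (\<integral>x. exp (\<alpha> * \<bar>f x\<bar>) \<partial>\<mu>)" by simp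
    then show ?thesis using True a by simp
  qed simp
qed

lemma tildeC_bound:
  fixes D k :: real
  assumes fin: "tildeC \<mu> f < \<infinity>" and k: "0 \<le> k"
    and b: "\<And>\<alpha>. 0 < \<alpha> \<Longrightarrow> integrable \<mu> (\<lambda>x. exp (\<alpha> * \<bar>f x\<bar>)) \<Longrightarrow>
             D \<le> 2 / \<alpha> * (3/2 + ln (\<integral>x. exp (\<alpha> * \<bar>f x\<bar>) \<partial>\<mu>)) * k"
  shows "ereal D \<le> tildeC \<mu> f * ereal k"
proof (cases "k = 0")
  case True
  obtain \<alpha> where "0 < \<alpha>" "integrable \<mu> (\<lambda>x. exp (\<alpha> * \<bar>f x\<bar>))" using tildeC_exp_moment[OF fin] by blast
  from b[OF this] True show ?thesis by (simp add: zero_ereal_def[symmetric])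
next
  case False
  then have kp: "0 < k" using k by simp
  have "ereal (D / k) \<le> tildeC \<mu> f" unfolding tildeC_def
  proof (rule INF_greatest)
    fix \<alpha> :: real assume a: "\<alpha> \<in> {0<..}"
    show "ereal (D / k) \<le> (if integrable \<mu> (\<lambda>x. exp (\<alpha> * \<bar>f x\<bar>))
       then ereal (2 / \<alpha> * (3/2 + ln (\<integral>x. exp (\<alpha> * \<bar>f x\<bar>) \<partial>\<mu>)))
       else \<infinity>)"
    proof (cases "integrable \<mu> (\<lambda>x. exp (\<alpha> * \<bar>f x\<bar>))")
      case True
      with b a have "D \<le> 2 / \<alpha> * (3/2 + ln (\<integral>x. exp (\<alpha> * \<bar>f x\<bar>) \<partial>\<mu>)) * k" by simp
      then have "D / k \<le> 2 / \<alpha> * (3/2 + ln (\<integral>x. exp (\<alpha> * \<bar>f x\<bar>) \<partial>\<mu>))"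
        using kp by (simp add: divide_le_eq)
      then show ?thesis using True by simp
    qed simp
  qed
  then have "ereal (D / k) * ereal k \<le> tildeC \<mu> f * ereal k"
    using k by (intro ereal_mult_right_mono) auto
  then show ?thesis using kp by simp
qed

lemma diff_bound:
  fixes \<mu> \<mu>' :: "'a measure" and f :: "'a \<Rightarrow> real"
  assumes P: "prob_space \<mu>" and P': "prob_space \<mu>'" and sets: "sets \<mu>' = sets \<mu>"
    and fin: "rel_entropy \<mu>' \<mu> < \<infinity>" and fm: "f \<in> borel_measurable \<mu>" and C: "tildeC \<mu> f < \<infinity>"
  shows "integrable \<mu> f" and "integrable \<mu>' f"
    and "ereal ((\<integral>x. f x \<partial>\<mu>) - (\<integral>x. f x \<partial>\<mu>')) \<le> tildeC \<mu> f *
          ereal (sqrt (real_of_ereal (rel_entropy \<mu>' \<mu>)) + real_of_ereal (rel_entropy \<mu>' \<mu>) / 2)"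
proof -
  interpret prob_space \<mu> by fact
  define h where "h = (\<lambda>x. enn2real (RN_deriv \<mu> \<mu>' x))"
  note props = rel_entropy_finite_props[OF P P' sets fin]
  have dens: "\<mu>' = density \<mu> (\<lambda>x. ennreal (h x))" using props(1) unfolding h_def .
  have hm: "h \<in> borel_measurable \<mu>" using props(2) unfolding h_def .
  have hnn: "\<And>x. 0 \<le> h x" using props(3) unfolding h_def .
  have hint: "integrable \<mu> h" using props(4) unfolding h_def .
  have h1: "(\<integral>x. h x \<partial>\<mu>) = 1" using props(5) unfolding h_def .
  have hlog: "integrable \<mu> (\<lambda>x. h x * ln (h x))" using props(6) unfolding h_def .
  have re: "rel_entropy \<mu>' \<mu> = ereal (\<integral>x. h x * ln (h x) \<partial>\<mu>)" using props(7) unfolding h_def .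
  define H where "H = (\<integral>x. h x * ln (h x) \<partial>\<mu>)"
  have reH: "real_of_ereal (rel_entropy \<mu>' \<mu>) = H" using re by (simp add: H_def)
  obtain \<alpha>0 where a0: "0 < \<alpha>0" "integrable \<mu> (\<lambda>x. exp (\<alpha>0 * \<bar>f x\<bar>))" using tildeC_exp_moment[OF C] by blast
  have e0: "integrable \<mu> (\<lambda>x. exp \<bar>\<alpha>0 * f x\<bar>)" using a0 by (simp add: abs_mult)
  have "integrable \<mu> (\<lambda>x. \<alpha>0 * f x)"
    by (rule Bochner_Integration.integrable_bound[OF e0]) (auto intro!: AE_I2 borel_measurable_times fm simp: abs_le_exp_abs fm borel_measurable_times)
  then show fi: "integrable \<mu> f" using a0 by simp
  have "integrable \<mu> (\<lambda>x. h x * (\<alpha>0 * f x))"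
    by (rule integrable_h_abs[OF hm hnn hint hlog _ e0]) (use fm in measurable)
  then have hfi: "integrable \<mu> (\<lambda>x. h x * f x)" using a0 by (simp add: mult.left_commute)
  have fm': "f \<in> borel_measurable \<mu>'" by (subst measurable_cong_sets[OF sets refl]) (rule fm)
  show "integrable \<mu>' f"
    using hfi hm hnn fm by (subst dens) (simp add: integrable_density)
  have "(\<integral>x. f x \<partial>density \<mu> (\<lambda>x. ennreal (h x))) = (\<integral>x. h x *\<^sub>R f x \<partial>\<mu>)"
    by (rule integral_density) (auto simp: hm hnn fm)
  then have intf': "(\<integral>x. f x \<partial>\<mu>') = (\<integral>x. h x * f x \<partial>\<mu>)" using dens by simp
  have H0: "0 \<le> H"
  proof -
    have "(\<integral>x. h x - 1 \<partial>\<mu>) \<le> H" unfolding H_def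
      using hint hlog by (intro integral_mono) (auto intro!: xlnx_ge hnn)
    then show ?thesis using hint h1 by (simp add: prob_space)
  qed
  have "ereal ((\<integral>x. f x \<partial>\<mu>) - (\<integral>x. h x * f x \<partial>\<mu>)) \<le> tildeC \<mu> f * ereal (sqrt H + H / 2)"
  proof (rule tildeC_bound[OF C])
    show "0 \<le> sqrt H + H / 2" using H0 by simp
    fix \<alpha> :: real assume a: "0 < \<alpha>" "integrable \<mu> (\<lambda>x. exp (\<alpha> * \<bar>f x\<bar>))"
    have ea: "integrable \<mu> (\<lambda>x. exp \<bar>\<alpha> * f x\<bar>)" using a by (simp add: abs_mult)
    have w: "(\<integral>x. \<alpha> * f x \<partial>\<mu>) - (\<integral>x. h x * (\<alpha> * f x) \<partial>\<mu>)
        \<le> (3 + 2 * ln (\<integral>x. exp \<bar>\<alpha> * f x\<bar> \<partial>\<mu>)) * (sqrt H + H / 2)"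
      unfolding H_def by (rule weighted_bound[OF P hm hnn hint h1 hlog _ ea]) (use fm in measurable)
    have "(\<integral>x. \<alpha> * f x \<partial>\<mu>) - (\<integral>x. h x * (\<alpha> * f x) \<partial>\<mu>) = \<alpha> * ((\<integral>x. f x \<partial>\<mu>) - (\<integral>x. h x * f x \<partial>\<mu>))"
      by (simp add: mult.left_commute right_diff_distrib)
    moreover have "(\<integral>x. exp \<bar>\<alpha> * f x\<bar> \<partial>\<mu>) = (\<integral>x. exp (\<alpha> * \<bar>f x\<bar>) \<partial>\<mu>)" using a by (simp add: abs_mult)
    ultimately have "\<alpha> * ((\<integral>x. f x \<partial>\<mu>) - (\<integral>x. h x * f x \<partial>\<mu>))
        \<le> (3 + 2 * ln (\<integral>x. exp (\<alpha> * \<bar>f x\<bar>) \<partial>\<mu>)) * (sqrt H + H / 2)" using w by simp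
    then have "(\<integral>x. f x \<partial>\<mu>) - (\<integral>x. h x * f x \<partial>\<mu>)
        \<le> (3 + 2 * ln (\<integral>x. exp (\<alpha> * \<bar>f x\<bar>) \<partial>\<mu>)) * (sqrt H + H / 2) / \<alpha>"
      using a by (simp add: le_divide_eq mult.commute)
    also have "\<dots> = 2 / \<alpha> * (3/2 + ln (\<integral>x. exp (\<alpha> * \<bar>f x\<bar>) \<partial>\<mu>)) * (sqrt H + H / 2)"
      using a by (simp add: field_simps)
    finally show "(\<integral>x. f x \<partial>\<mu>) - (\<integral>x. h x * f x \<partial>\<mu>)
        \<le> 2 / \<alpha> * (3/2 + ln (\<integral>x. exp (\<alpha> * \<bar>f x\<bar>) \<partial>\<mu>)) * (sqrt H + H / 2)" .
  qed
  then show "ereal ((\<integral>x. f x \<partial>\<mu>) - (\<integral>x. f x \<partial>\<mu>')) \<le> tildeC \<mu> f *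
          ereal (sqrt (real_of_ereal (rel_entropy \<mu>' \<mu>)) + real_of_ereal (rel_entropy \<mu>' \<mu>) / 2)"
    using intf' reH by simp
qed

theorem lemma3p5:
  fixes \<mu> \<mu>' :: "'a::polish_space measure" and \<nu> \<nu>' :: "'b::polish_space measure"
    and c :: "'a \<times> 'b \<Rightarrow> real"
    and f f' :: "'a \<Rightarrow> real" and g g' :: "'b \<Rightarrow> real"
    and \<pi> \<pi>' R :: "('a \<times> 'b) measure" and \<xi> :: real
  assumes \<mu>: "prob_space \<mu>" "sets \<mu> = sets borel"
    and \<mu>': "prob_space \<mu>'" "sets \<mu>' = sets borel"
    and \<nu>: "prob_space \<nu>" "sets \<nu> = sets borel"
    and \<nu>': "prob_space \<nu>'" "sets \<nu>' = sets borel"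
    and c_meas: "c \<in> borel_measurable (\<mu> \<Otimes>\<^sub>M \<nu>)"
    and c_int: "integrable (\<mu> \<Otimes>\<^sub>M \<nu>) (\<lambda>z. exp (- c z))"
    and \<xi>_def: "\<xi> = (\<integral>z. exp (- c z) \<partial>(\<mu> \<Otimes>\<^sub>M \<nu>))"
    and R_def: "R = density (\<mu> \<Otimes>\<^sub>M \<nu>) (\<lambda>z. ennreal (exp (- c z) / \<xi>))"
    and H\<mu>: "rel_entropy \<mu>' \<mu> < \<infinity>"
    and H\<nu>: "rel_entropy \<nu>' \<nu> < \<infinity>"
    and f_meas: "f \<in> borel_measurable \<mu>" and f'_meas: "f' \<in> borel_measurable \<mu>"
    and g_meas: "g \<in> borel_measurable \<nu>" and g'_meas: "g' \<in> borel_measurable \<nu>"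
    and C1: "tildeC \<mu> f' < \<infinity>"
    and \<pi>_coup: "\<pi> \<in> couplings \<mu> \<nu>"
    and \<pi>'_coup: "\<pi>' \<in> couplings \<mu>' \<nu>'"
    and \<pi>_def: "\<pi> = density (\<mu> \<Otimes>\<^sub>M \<nu>) (\<lambda>z. ennreal (exp (f (fst z) + g (snd z) - c z)))"
    and \<pi>'_def: "\<pi>' = density (\<mu> \<Otimes>\<^sub>M \<nu>) (\<lambda>z. ennreal (exp (f' (fst z) + g' (snd z) - c z)))"
  shows
    "(tildeC \<nu> g' < \<infinity> \<longrightarrow>
        rel_entropy \<pi>' R < \<infinity> \<and>
        rel_entropy \<pi> R - rel_entropy \<pi>' R
          \<le> rel_entropy \<pi> \<pi>'
             + tildeC \<mu> f' * ereal (sqrt (real_of_ereal (rel_entropy \<mu>' \<mu>))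
                                    + real_of_ereal (rel_entropy \<mu>' \<mu>) / 2)
             + tildeC \<nu> g' * ereal (sqrt (real_of_ereal (rel_entropy \<nu>' \<nu>))
                                    + real_of_ereal (rel_entropy \<nu>' \<nu>) / 2))
     \<and> (\<nu>' = \<nu> \<and> integrable \<mu> f \<and> integrable \<nu> g \<longrightarrow>
        rel_entropy \<pi>' R < \<infinity> \<and>
        rel_entropy \<pi> R - rel_entropy \<pi>' R
          \<le> rel_entropy \<pi> \<pi>'
             + tildeC \<mu> f' * ereal (sqrt (real_of_ereal (rel_entropy \<mu>' \<mu>))
                                    + real_of_ereal (rel_entropy \<mu>' \<mu>) / 2))"
proof -
  interpret \<mu>: prob_space \<mu> by fact
  interpret \<nu>: prob_space \<nu> by fact
  interpret PP: pair_prob_space \<mu> \<nu> by unfold_locales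
  define P where "P = \<mu> \<Otimes>\<^sub>M \<nu>"
  have Pprob: "prob_space P" unfolding P_def by (rule PP.prob_space_axioms)
  interpret P: prob_space P by fact
  have Psf: "sigma_finite_measure P" by (rule P.sigma_finite_measure_axioms)
  have spP: "space P = space \<mu> \<times> space \<nu>" unfolding P_def by (simp add: space_pair_measure)
  have [measurable]: "f \<in> borel_measurable \<mu>" "f' \<in> borel_measurable \<mu>" "g \<in> borel_measurable \<nu>" "g' \<in> borel_measurable \<nu>"
    using f_meas f'_meas g_meas g'_meas by auto
  have cm[measurable]: "c \<in> borel_measurable P" using c_meas by (simp add: P_def)
  have fstm[measurable]: "fst \<in> measurable P \<mu>" unfolding P_def by (rule measurable_fst)
  have sndm[measurable]: "snd \<in> measurable P \<nu>" unfolding P_def by (rule measurable_snd)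
  have \<pi>c: "sets \<pi> = sets (\<mu> \<Otimes>\<^sub>M \<nu>)" "prob_space \<pi>" "distr \<pi> \<mu> fst = \<mu>" "distr \<pi> \<nu> snd = \<nu>"
    using \<pi>_coup by (auto simp: couplings_def)
  have \<pi>'c: "sets \<pi>' = sets (\<mu>' \<Otimes>\<^sub>M \<nu>')" "prob_space \<pi>'" "distr \<pi>' \<mu>' fst = \<mu>'" "distr \<pi>' \<nu>' snd = \<nu>'"
    using \<pi>'_coup by (auto simp: couplings_def)
  have s\<mu>: "sets \<mu>' = sets \<mu>" using \<mu> \<mu>' by simp
  have s\<nu>: "sets \<nu>' = sets \<nu>" using \<nu> \<nu>' by simp
  have cint: "integrable P (\<lambda>z. exp (- c z))" using c_int by (simp add: P_def)
  have \<xi>P: "\<xi> = (\<integral>z. exp (- c z) \<partial>P)" using \<xi>_def by (simp add: P_def)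
  have \<xi>0: "0 < \<xi>"
  proof -
    have "0 \<le> \<xi>" unfolding \<xi>P by (intro integral_nonneg_AE) auto
    moreover have "\<xi> \<noteq> 0"
    proof
      assume "\<xi> = 0"
      then have "AE z in P. exp (- c z) = 0" using cint unfolding \<xi>P
        by (subst (asm) integral_nonneg_eq_0_iff_AE) auto
      then show False by simp
    qed
    ultimately show ?thesis by simp
  qed
  define \<phi> where "\<phi> = (\<lambda>z. f (fst z) + g (snd z))"
  define \<phi>' where "\<phi>' = (\<lambda>z. f' (fst z) + g' (snd z))"
  have \<phi>m[measurable]: "\<phi> \<in> borel_measurable P" "\<phi>' \<in> borel_measurable P" unfolding \<phi>_def \<phi>'_def by measurable
  have \<pi>P: "\<pi> = density P (\<lambda>z. ennreal (exp (f (fst z) + g (snd z) - c z)))" using \<pi>_def by (simp add: P_def)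
  have \<pi>'P: "\<pi>' = density P (\<lambda>z. ennreal (exp (f' (fst z) + g' (snd z) - c z)))" using \<pi>'_def by (simp add: P_def)
  have RP: "R = density P (\<lambda>z. ennreal (exp (- c z) / \<xi>))" using R_def by (simp add: P_def)
  have H\<pi>R: "rel_entropy \<pi> R = (if integrable \<pi> (\<lambda>z. \<phi> z + ln \<xi>) then ereal (\<integral>z. \<phi> z + ln \<xi> \<partial>\<pi>) else \<infinity>)"
  proof -
    have e: "ln (exp (f (fst z) + g (snd z) - c z) / (exp (- c z) / \<xi>)) = \<phi> z + ln \<xi>" for z
    proof -
      have "exp (f (fst z) + g (snd z) - c z) / (exp (- c z) / \<xi>) = \<xi> * exp (\<phi> z)"
        using \<xi>0 by (simp add: \<phi>_def exp_diff exp_minus field_simps)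
      then show ?thesis using \<xi>0 by (simp add: ln_mult)
    qed
    have e': "(\<lambda>z. ln (exp (f (fst z) + g (snd z) - c z) / (exp (- c z) / \<xi>))) = (\<lambda>z. \<phi> z + ln \<xi>)"
      by (rule ext) (rule e)
    have "rel_entropy \<pi> R = (if integrable \<pi> (\<lambda>z. ln (exp (f (fst z) + g (snd z) - c z) / (exp (- c z) / \<xi>)))
       then ereal (\<integral>z. ln (exp (f (fst z) + g (snd z) - c z) / (exp (- c z) / \<xi>)) \<partial>\<pi>) else \<infinity>)"
      unfolding \<pi>P RP
      by (rule rel_entropy_density[OF Psf, of "\<lambda>z. exp (f (fst z) + g (snd z) - c z)" "\<lambda>z. exp (- c z) / \<xi>"])
        (auto simp: \<xi>0)
    then show ?thesis unfolding e' .
  qed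
  have H\<pi>'R: "rel_entropy \<pi>' R = (if integrable \<pi>' (\<lambda>z. \<phi>' z + ln \<xi>) then ereal (\<integral>z. \<phi>' z + ln \<xi> \<partial>\<pi>') else \<infinity>)"
  proof -
    have e: "ln (exp (f' (fst z) + g' (snd z) - c z) / (exp (- c z) / \<xi>)) = \<phi>' z + ln \<xi>" for z
    proof -
      have "exp (f' (fst z) + g' (snd z) - c z) / (exp (- c z) / \<xi>) = \<xi> * exp (\<phi>' z)"
        using \<xi>0 by (simp add: \<phi>'_def exp_diff exp_minus field_simps)
      then show ?thesis using \<xi>0 by (simp add: ln_mult)
    qed
    have e': "(\<lambda>z. ln (exp (f' (fst z) + g' (snd z) - c z) / (exp (- c z) / \<xi>))) = (\<lambda>z. \<phi>' z + ln \<xi>)"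
      by (rule ext) (rule e)
    have "rel_entropy \<pi>' R = (if integrable \<pi>' (\<lambda>z. ln (exp (f' (fst z) + g' (snd z) - c z) / (exp (- c z) / \<xi>)))
       then ereal (\<integral>z. ln (exp (f' (fst z) + g' (snd z) - c z) / (exp (- c z) / \<xi>)) \<partial>\<pi>') else \<infinity>)"
      unfolding \<pi>'P RP
      by (rule rel_entropy_density[OF Psf, of "\<lambda>z. exp (f' (fst z) + g' (snd z) - c z)" "\<lambda>z. exp (- c z) / \<xi>"])
        (auto simp: \<xi>0)
    then show ?thesis unfolding e' .
  qed
  have H\<pi>\<pi>': "rel_entropy \<pi> \<pi>' = (if integrable \<pi> (\<lambda>z. \<phi> z - \<phi>' z) then ereal (\<integral>z. \<phi> z - \<phi>' z \<partial>\<pi>) else \<infinity>)"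
  proof -
    have e: "ln (exp (f (fst z) + g (snd z) - c z) / exp (f' (fst z) + g' (snd z) - c z)) = \<phi> z - \<phi>' z" for z
      by (simp add: \<phi>_def \<phi>'_def exp_diff[symmetric] ln_div)
    have e': "(\<lambda>z. ln (exp (f (fst z) + g (snd z) - c z) / exp (f' (fst z) + g' (snd z) - c z))) = (\<lambda>z. \<phi> z - \<phi>' z)"
      by (rule ext) (rule e)
    have "rel_entropy \<pi> \<pi>' = (if integrable \<pi> (\<lambda>z. ln (exp (f (fst z) + g (snd z) - c z) / exp (f' (fst z) + g' (snd z) - c z)))
       then ereal (\<integral>z. ln (exp (f (fst z) + g (snd z) - c z) / exp (f' (fst z) + g' (snd z) - c z)) \<partial>\<pi>) else \<infinity>)"
      unfolding \<pi>P \<pi>'P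
      by (rule rel_entropy_density[OF Psf, of "\<lambda>z. exp (f (fst z) + g (snd z) - c z)" "\<lambda>z. exp (f' (fst z) + g' (snd z) - c z)"])
        auto
    then show ?thesis unfolding e' .
  qed
  have \<pi>s: "sets \<pi> = sets P" using \<pi>c(1) by (simp add: P_def)
  have \<pi>'s: "sets \<pi>' = sets P" using \<pi>'P by simp
  interpret \<pi>: prob_space \<pi> by (rule \<pi>c(2))
  interpret \<pi>': prob_space \<pi>' by (rule \<pi>'c(2))
  have \<pi>'s2: "sets \<pi>' = sets (\<mu>' \<Otimes>\<^sub>M \<nu>')" by (rule \<pi>'c(1))
  have mf': "f' \<in> borel_measurable \<mu>'" by (subst measurable_cong_sets[OF s\<mu> refl]) simp
  have mg': "g' \<in> borel_measurable \<nu>'" by (subst measurable_cong_sets[OF s\<nu> refl]) simp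
  note mfst = marg_fst[OF \<pi>c(1) \<pi>c(3)] and msnd = marg_snd[OF \<pi>c(1) \<pi>c(4)]
  note mfst' = marg_fst[OF \<pi>'s2 \<pi>'c(3)] and msnd' = marg_snd[OF \<pi>'s2 \<pi>'c(4)]
  define D1 where "D1 = (\<integral>x. f' x \<partial>\<mu>) - (\<integral>x. f' x \<partial>\<mu>')"
  define D2 where "D2 = (\<integral>y. g' y \<partial>\<nu>) - (\<integral>y. g' y \<partial>\<nu>')"
  have core: "rel_entropy \<pi>' R < \<infinity> \<and> rel_entropy \<pi> R - rel_entropy \<pi>' R \<le> rel_entropy \<pi> \<pi>' + ereal D1 + ereal D2"
    if i1: "integrable \<mu> f'" and i2: "integrable \<mu>' f'" and i3: "integrable \<nu> g'" and i4: "integrable \<nu>' g'"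
  proof -
    have j1: "integrable \<pi> (\<lambda>z. f' (fst z))" using mfst(1)[of f'] i1 by simp
    have j2: "integrable \<pi> (\<lambda>z. g' (snd z))" using msnd(1)[of g'] i3 by simp
    have j3: "integrable \<pi>' (\<lambda>z. f' (fst z))" using mfst'(1)[OF mf'] i2 by simp
    have j4: "integrable \<pi>' (\<lambda>z. g' (snd z))" using msnd'(1)[OF mg'] i4 by simp
    have \<phi>'\<pi>: "integrable \<pi> \<phi>'" unfolding \<phi>'_def using j1 j2 by simp
    have \<phi>'\<pi>': "integrable \<pi>' \<phi>'" unfolding \<phi>'_def using j3 j4 by simp
    have I\<phi>'\<pi>: "(\<integral>z. \<phi>' z \<partial>\<pi>) = (\<integral>x. f' x \<partial>\<mu>) + (\<integral>y. g' y \<partial>\<nu>)"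
      unfolding \<phi>'_def using j1 j2 mfst(2)[of f'] msnd(2)[of g'] by simp
    have I\<phi>'\<pi>': "(\<integral>z. \<phi>' z \<partial>\<pi>') = (\<integral>x. f' x \<partial>\<mu>') + (\<integral>y. g' y \<partial>\<nu>')"
      unfolding \<phi>'_def using j3 j4 mfst'(2)[OF mf'] msnd'(2)[OF mg'] by simp
    have r2: "rel_entropy \<pi>' R = ereal ((\<integral>z. \<phi>' z \<partial>\<pi>') + ln \<xi>)"
      using H\<pi>'R \<phi>'\<pi>' by (simp add: \<pi>'.prob_space)
    show ?thesis
    proof (cases "integrable \<pi> \<phi>")
      case True
      have r1: "rel_entropy \<pi> R = ereal ((\<integral>z. \<phi> z \<partial>\<pi>) + ln \<xi>)"
        using H\<pi>R True by (simp add: \<pi>.prob_space)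
      have r3: "rel_entropy \<pi> \<pi>' = ereal ((\<integral>z. \<phi> z \<partial>\<pi>) - (\<integral>z. \<phi>' z \<partial>\<pi>))"
        using H\<pi>\<pi>' True \<phi>'\<pi> by simp
      show ?thesis using r1 r2 r3 I\<phi>'\<pi> I\<phi>'\<pi>' unfolding D1_def D2_def by simp
    next
      case False
      have r1: "rel_entropy \<pi> R = \<infinity>"
      proof -
        have "\<not> integrable \<pi> (\<lambda>z. \<phi> z + ln \<xi>)"
        proof
          assume "integrable \<pi> (\<lambda>z. \<phi> z + ln \<xi>)"
          then have "integrable \<pi> (\<lambda>z. (\<phi> z + ln \<xi>) - ln \<xi>)" by (rule Bochner_Integration.integrable_diff) simp
          then show False using False by simp
        qed
        then show ?thesis using H\<pi>R by simp
      qed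
      have r3: "rel_entropy \<pi> \<pi>' = \<infinity>"
      proof -
        have "\<not> integrable \<pi> (\<lambda>z. \<phi> z - \<phi>' z)"
        proof
          assume "integrable \<pi> (\<lambda>z. \<phi> z - \<phi>' z)"
          then have "integrable \<pi> (\<lambda>z. (\<phi> z - \<phi>' z) + \<phi>' z)" using \<phi>'\<pi> by (rule Bochner_Integration.integrable_add)
          then show False using False by simp
        qed
        then show ?thesis using H\<pi>\<pi>' by simp
      qed
      show ?thesis using r1 r2 r3 by simp
    qed
  qed
  have DB1: "integrable \<mu> f'" "integrable \<mu>' f'"
    "ereal D1 \<le> tildeC \<mu> f' * ereal (sqrt (real_of_ereal (rel_entropy \<mu>' \<mu>)) + real_of_ereal (rel_entropy \<mu>' \<mu>) / 2)"
    using diff_bound[OF \<mu>(1) \<mu>'(1) s\<mu> H\<mu> f'_meas C1] unfolding D1_def by auto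
  show ?thesis
  proof (intro conjI impI)
    assume C2: "tildeC \<nu> g' < \<infinity>"
    have DB2: "integrable \<nu> g'" "integrable \<nu>' g'"
      "ereal D2 \<le> tildeC \<nu> g' * ereal (sqrt (real_of_ereal (rel_entropy \<nu>' \<nu>)) + real_of_ereal (rel_entropy \<nu>' \<nu>) / 2)"
      using diff_bound[OF \<nu>(1) \<nu>'(1) s\<nu> H\<nu> g'_meas C2] unfolding D2_def by auto
    note cc = core[OF DB1(1,2) DB2(1,2)]
    then show "rel_entropy \<pi>' R < \<infinity>" by simp
    have "rel_entropy \<pi> \<pi>' + ereal D1 + ereal D2 \<le> rel_entropy \<pi> \<pi>'
       + tildeC \<mu> f' * ereal (sqrt (real_of_ereal (rel_entropy \<mu>' \<mu>)) + real_of_ereal (rel_entropy \<mu>' \<mu>) / 2)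
       + tildeC \<nu> g' * ereal (sqrt (real_of_ereal (rel_entropy \<nu>' \<nu>)) + real_of_ereal (rel_entropy \<nu>' \<nu>) / 2)"
      using DB1(3) DB2(3) by (intro add_mono order.refl)
    with cc show "rel_entropy \<pi> R - rel_entropy \<pi>' R \<le> rel_entropy \<pi> \<pi>'
       + tildeC \<mu> f' * ereal (sqrt (real_of_ereal (rel_entropy \<mu>' \<mu>)) + real_of_ereal (rel_entropy \<mu>' \<mu>) / 2)
       + tildeC \<nu> g' * ereal (sqrt (real_of_ereal (rel_entropy \<nu>' \<nu>)) + real_of_ereal (rel_entropy \<nu>' \<nu>) / 2)"
      by (meson order.trans)
  next
    assume A2: "\<nu>' = \<nu> \<and> integrable \<mu> f \<and> integrable \<nu> g"
    have \<nu>\<nu>: "\<nu>' = \<nu>" and fi: "integrable \<mu> f" and gi: "integrable \<nu> g" using A2 by auto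
    define ea where "ea = (\<lambda>z. exp (f (fst z) + g (snd z) - c z))"
    define ea' where "ea' = (\<lambda>z. exp (f' (fst z) + g' (snd z) - c z))"
    have eam[measurable]: "ea \<in> borel_measurable P" "ea' \<in> borel_measurable P" unfolding ea_def ea'_def by measurable
    have \<pi>ea: "\<pi> = density P (\<lambda>z. ennreal (ea z))" using \<pi>P by (simp add: ea_def)
    have \<pi>ea': "\<pi>' = density P (\<lambda>z. ennreal (ea' z))" using \<pi>'P by (simp add: ea'_def)
    have tr: "integrable \<pi> F \<longleftrightarrow> integrable P (\<lambda>z. ea z * F z)" if [measurable]: "F \<in> borel_measurable P" for F
      unfolding \<pi>ea by (subst integrable_density) (auto simp: ea_def)
    have tr': "integrable \<pi>' F \<longleftrightarrow> integrable P (\<lambda>z. ea' z * F z)" if [measurable]: "F \<in> borel_measurable P" for F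
      unfolding \<pi>ea' by (subst integrable_density) (auto simp: ea'_def)
    define w where "w = (\<lambda>y. g' y - g y)"
    have wm[measurable]: "w \<in> borel_measurable \<nu>" unfolding w_def by measurable
    have U: "ea z * max 0 (w (snd z)) \<le> ea' z + ea z * \<bar>f' (fst z) - f (fst z)\<bar>" for z
    proof -
      define t where "t = (f' (fst z) - f (fst z)) + w (snd z)"
      have "ea' z = exp t * ea z" unfolding ea_def ea'_def t_def w_def by (simp add: exp_add[symmetric] algebra_simps)
      moreover have "1 + t \<le> exp t" by (rule exp_ge_add_one_self)
      ultimately have "(1 + t) * ea z \<le> ea' z" by (simp add: ea_def mult_right_mono)
      then have a: "ea z * w (snd z) \<le> ea' z - ea z - ea z * (f' (fst z) - f (fst z))"
        unfolding t_def by (simp add: algebra_simps)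
      have b: "- (ea z * (f' (fst z) - f (fst z))) \<le> ea z * \<bar>f' (fst z) - f (fst z)\<bar>"
      proof -
        have "ea z * (- (f' (fst z) - f (fst z))) \<le> ea z * \<bar>f' (fst z) - f (fst z)\<bar>"
          by (intro mult_left_mono) (auto simp: ea_def)
        then show ?thesis by (simp add: algebra_simps)
      qed
      have c: "0 \<le> ea z" "0 \<le> ea' z" "0 \<le> ea z * \<bar>f' (fst z) - f (fst z)\<bar>" by (auto simp: ea_def ea'_def)
      show ?thesis
      proof (cases "0 \<le> w (snd z)")
        case True then show ?thesis using a b c by simp
      next
        case False then show ?thesis using c by simp
      qed
    qed
    have iU: "integrable P (\<lambda>z. ea z * max 0 (w (snd z)))"
    proof (rule Bochner_Integration.integrable_bound[where f="\<lambda>z. ea' z + ea z * \<bar>f' (fst z) - f (fst z)\<bar>"])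
      have "integrable \<pi>' (\<lambda>z. 1::real)" by simp
      then have "integrable P (\<lambda>z. ea' z * 1)" by (subst tr'[symmetric]) auto
      moreover have "integrable \<pi> (\<lambda>z. \<bar>f' (fst z) - f (fst z)\<bar>)"
        using mfst(1)[of "\<lambda>x. \<bar>f' x - f x\<bar>"] DB1(1) fi by simp
      then have "integrable P (\<lambda>z. ea z * \<bar>f' (fst z) - f (fst z)\<bar>)" by (subst tr[symmetric]) auto
      ultimately show "integrable P (\<lambda>z. ea' z + ea z * \<bar>f' (fst z) - f (fst z)\<bar>)" by simp
      show "(\<lambda>z. ea z * max 0 (w (snd z))) \<in> borel_measurable P" by measurable
      show "AE z in P. norm (ea z * max 0 (w (snd z))) \<le> norm (ea' z + ea z * \<bar>f' (fst z) - f (fst z)\<bar>)"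
      proof (intro AE_I2)
        fix z
        have "0 \<le> ea z * max 0 (w (snd z))" by (auto simp: ea_def)
        moreover have "0 \<le> ea' z + ea z * \<bar>f' (fst z) - f (fst z)\<bar>" by (auto simp: ea_def ea'_def)
        ultimately show "norm (ea z * max 0 (w (snd z))) \<le> norm (ea' z + ea z * \<bar>f' (fst z) - f (fst z)\<bar>)"
          using U[of z] by simp
      qed
    qed
    then have "integrable \<pi> (\<lambda>z. max 0 (w (snd z)))" by (subst tr) auto
    then have wpi: "integrable \<nu> (\<lambda>y. max 0 (w y))" using msnd(1)[of "\<lambda>y. max 0 (w y)"] by simp
    have Lo: "ea' z * max 0 (- g' (snd z)) \<le> exp (- c z) + ea' z * \<bar>f' (fst z)\<bar>" for z
    proof -
      define t where "t = f' (fst z) + g' (snd z)"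
      have "exp (- c z) = exp (- t) * ea' z" unfolding ea'_def t_def by (simp add: exp_add[symmetric])
      moreover have "1 + (- t) \<le> exp (- t)" by (rule exp_ge_add_one_self)
      ultimately have "(1 - t) * ea' z \<le> exp (- c z)" by (simp add: ea'_def mult_right_mono)
      then have a: "ea' z * (- g' (snd z)) \<le> exp (- c z) - ea' z + ea' z * f' (fst z)"
        unfolding t_def by (simp add: algebra_simps)
      have b: "ea' z * f' (fst z) \<le> ea' z * \<bar>f' (fst z)\<bar>" by (intro mult_left_mono) (auto simp: ea'_def)
      have c: "0 \<le> ea' z" "0 \<le> exp (- c z)" "0 \<le> ea' z * \<bar>f' (fst z)\<bar>" by (auto simp: ea'_def)
      show ?thesis
      proof (cases "0 \<le> - g' (snd z)")
        case True then show ?thesis using a b c by simp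
      next
        case False then show ?thesis using c by simp
      qed
    qed
    have iL: "integrable P (\<lambda>z. ea' z * max 0 (- g' (snd z)))"
    proof (rule Bochner_Integration.integrable_bound[where f="\<lambda>z. exp (- c z) + ea' z * \<bar>f' (fst z)\<bar>"])
      have "integrable \<pi>' (\<lambda>z. \<bar>f' (fst z)\<bar>)"
        using mfst'(1)[of "\<lambda>x. \<bar>f' x\<bar>"] DB1(2) mf' by simp
      then have "integrable P (\<lambda>z. ea' z * \<bar>f' (fst z)\<bar>)" by (subst tr'[symmetric]) auto
      then show "integrable P (\<lambda>z. exp (- c z) + ea' z * \<bar>f' (fst z)\<bar>)" using cint by simp
      show "(\<lambda>z. ea' z * max 0 (- g' (snd z))) \<in> borel_measurable P" by measurable
      show "AE z in P. norm (ea' z * max 0 (- g' (snd z))) \<le> norm (exp (- c z) + ea' z * \<bar>f' (fst z)\<bar>)"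
      proof (intro AE_I2)
        fix z
        have "0 \<le> ea' z * max 0 (- g' (snd z))" by (auto simp: ea'_def)
        moreover have "0 \<le> exp (- c z) + ea' z * \<bar>f' (fst z)\<bar>" by (auto simp: ea'_def)
        ultimately show "norm (ea' z * max 0 (- g' (snd z))) \<le> norm (exp (- c z) + ea' z * \<bar>f' (fst z)\<bar>)"
          using Lo[of z] by simp
      qed
    qed
    then have "integrable \<pi>' (\<lambda>z. max 0 (- g' (snd z)))" by (subst tr') auto
    then have gni: "integrable \<nu> (\<lambda>y. max 0 (- g' y))"
      using msnd'(1)[of "\<lambda>y. max 0 (- g' y)"] mg' \<nu>\<nu> by simp
    have g'i: "integrable \<nu> g'"
    proof (rule Bochner_Integration.integrable_bound[where f="\<lambda>y. max 0 (w y) + \<bar>g y\<bar> + max 0 (- g' y)"])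
      show "integrable \<nu> (\<lambda>y. max 0 (w y) + \<bar>g y\<bar> + max 0 (- g' y))" using wpi gi gni by simp
      show "g' \<in> borel_measurable \<nu>" by simp
      show "AE y in \<nu>. norm (g' y) \<le> norm (max 0 (w y) + \<bar>g y\<bar> + max 0 (- g' y))"
        by (intro AE_I2) (auto simp: w_def)
    qed
    have D20: "D2 = 0" unfolding D2_def using A2 by simp
    note cc = core[OF DB1(1,2) g'i] 
    then have cc: "rel_entropy \<pi>' R < \<infinity> \<and> rel_entropy \<pi> R - rel_entropy \<pi>' R \<le> rel_entropy \<pi> \<pi>' + ereal D1"
      using A2 g'i D20 by simp
    then show "rel_entropy \<pi>' R < \<infinity>" by simp
    have "rel_entropy \<pi> \<pi>' + ereal D1 \<le> rel_entropy \<pi> \<pi>'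
       + tildeC \<mu> f' * ereal (sqrt (real_of_ereal (rel_entropy \<mu>' \<mu>)) + real_of_ereal (rel_entropy \<mu>' \<mu>) / 2)"
      using DB1(3) by (intro add_mono order.refl)
    with cc show "rel_entropy \<pi> R - rel_entropy \<pi>' R \<le> rel_entropy \<pi> \<pi>'
       + tildeC \<mu> f' * ereal (sqrt (real_of_ereal (rel_entropy \<mu>' \<mu>)) + real_of_ereal (rel_entropy \<mu>' \<mu>) / 2)"
      by (meson order.trans)
  qed
qed

end
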